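(* Run the Algorithm with an arbitrary admissible weight sequence. Let $\epsilon\in(0,1)$ and let $\mathcal T_1\ge 0$ be an integer such that (on the realization considered) $(1-\epsilon)\lambda_{\min} I\preceq\tilde H_t\preceq(1+\epsilon)\lambda_{\max} I$ for all $t\ge\mathcal T_1$ (e.g. on the event $\mathcal E$ of the positive-definiteness lemma under uniform averaging). Set $$\phi=\frac{4\rho\beta(1-\beta)(1-\epsilon)}{\kappa^2(1+\epsilon)}.$$ Then $f(x_{t+1})-f(x^\star)\le (1-\phi)\bigl(f(x_t)-f(x^\star)\bigr)$ for all $t\ge\mathcal T_1$, and consequently, for all $t\ge \mathcal T_1$, $$\|x_t-x^\star\|\le\Bigl\{\tfrac{2}{\lambda_{\min}}\bigl(f(x_0)-f(x^\star)\bigr)(1-\phi)^{t-\mathcal T_1}\Bigr\}^{1/2},\qquad \|x_t-x^\star\|_{H^\star}\le\Bigl\{2\kappa\bigl(f(x_0)-f(x^\star)\bigr)(1-\phi)^{t-\mathcal T_1}\Bigr\}^{1/2}.$$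
   Context: Setting. $f:\mathbb{R}^d\to\mathbb{R}$ is twice continuously differentiable with Hessian $H(x)=\nabla^2 f(x)$ satisfying $\lambda_{\min} I\preceq H(x)\preceq \lambda_{\max} I$ for all $x\in\mathbb{R}^d$, where $0<\lambda_{\min}\le\lambda_{\max}$; $\kappa=\lambda_{\max}/\lambda_{\min}$; $x^\star$ is the unique minimizer of $f$ and $H^\star=H(x^\star)$. $\|\cdot\|$ is the Euclidean norm for vectors and the spectral norm for matrices; $\|v\|_A=\sqrt{v^\top A v}$ for $A\succeq 0$. Stochastic Hessian oracle: queried at $x$, it returns $\hat H(x)=H(x)+E(x)$, where $E(x)$ is a random symmetric $d\times d$ matrix. Algorithm (stochastic Newton with Hessian averaging). Inputs: deterministic $x_0\in\mathbb{R}^d$, a nondecreasing nonnegative weight sequence $(w_t)_{t\ge -1}$ with $w_{-1}=0$ and $w_t>0$ for $t\ge 0$, constants $\beta\in(0,1/2)$, $\rho\in(0,1)$, and $\tilde H_{-1}=0$. For $t=0,1,2,\dots$: (1) query the oracle at $x_t$ to obtain $\hat H_t=H_t+E_t$, $H_t=H(x_t)$, where conditionally on all randomness generated before iteration $t$, $E_t$ has the law of $E(x_t)$; (2) set $\tilde H_t=\frac{w_{t-1}}{w_t}\tilde H_{t-1}+\bigl(1-\frac{w_{t-1}}{w_t}\bigr)\hat H_t$; (3) if the system $\tilde H_t p=-\nabla f(x_t)$ has no solution, or its solution $p_t$ satisfies $\nabla f(x_t)^\top p_t\ge 0$, set $x_{t+1}=x_t$; (4) otherwise let $\mu_t=\rho^{j_t}$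 where $j_t$ is the smallest nonnegative integer with $f(x_t+\mu_t p_t)\le f(x_t)+\mu_t\beta\nabla f(x_t)^\top p_t$, and set $x_{t+1}=x_t+\mu_t p_t$. *)

theory Defs
  imports "HOL-Analysis.Analysis"
begin

definition loewner_le :: "real^'n^'n \<Rightarrow> real^'n^'n \<Rightarrow> bool" where
  "loewner_le A B \<longleftrightarrow> (\<forall>v. v \<bullet> (A *v v) \<le> v \<bullet> (B *v v))"

definition wnorm :: "real^'n^'n \<Rightarrow> real^'n \<Rightarrow> real" where
  "wnorm A v = sqrt (v \<bullet> (A *v v))"

text \<open>Averaged Hessian: Htil_{-1} = 0, w_{-1} = 0, so Htil_0 = Hhat_0.\<close>
fun Htil_seq :: "(int \<Rightarrow> real) \<Rightarrow> (nat \<Rightarrow> real^'n^'n) \<Rightarrow> nat \<Rightarrow> real^'n^'n" where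
  "Htil_seq w Hh 0 = (w (-1) / w 0) *\<^sub>R 0 + (1 - w (-1) / w 0) *\<^sub>R Hh 0"
| "Htil_seq w Hh (Suc t) = (w (int t) / w (int (Suc t))) *\<^sub>R Htil_seq w Hh t
      + (1 - w (int t) / w (int (Suc t))) *\<^sub>R Hh (Suc t)"

text \<open>One step (3)/(4) of the algorithm, given the current Hessian estimate Ht,
  current iterate xt, chosen solution p of Ht p = -grad f(xt) (if any) and next iterate xn.\<close>
definition alg_step ::
  "(real^'n \<Rightarrow> real) \<Rightarrow> (real^'n \<Rightarrow> real^'n) \<Rightarrow> real \<Rightarrow> real \<Rightarrow>
   real^'n^'n \<Rightarrow> real^'n \<Rightarrow> real^'n \<Rightarrow> real^'n \<Rightarrow> bool" where
  "alg_step f g \<beta> \<rho> Ht xt p xn \<longleftrightarrow>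
     ((\<nexists>q. Ht *v q = - g xt) \<and> xn = xt)
   \<or> (Ht *v p = - g xt \<and> g xt \<bullet> p \<ge> 0 \<and> xn = xt)
   \<or> (Ht *v p = - g xt \<and> g xt \<bullet> p < 0 \<and>
       xn = xt + (\<rho> ^ (LEAST j. f (xt + \<rho> ^ j *\<^sub>R p) \<le> f xt + \<rho> ^ j * \<beta> * (g xt \<bullet> p))) *\<^sub>R p)"

end

theory Submission
  imports Defs
begin

lemma mat_sym_inner:
  fixes M :: "real^'n^'n"
  assumes "transpose M = M"
  shows "a \<bullet> (M *v b) = b \<bullet> (M *v a)"
proof -
  have "a \<bullet> (M *v b) = (a v* M) \<bullet> b" by (simp add: dot_lmul_matrix)
  also have "a v* M = M *v a" using assms transpose_matrix_vector[of M a] by simp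
  finally show ?thesis by (simp add: inner_commute)
qed

lemma transpose_add': "transpose (A + B) = transpose A + transpose (B::real^'n^'m)"
  by (simp add: transpose_def vec_eq_iff)

lemma loewner_lower: "loewner_le (c *\<^sub>R mat 1) M \<Longrightarrow> c * (v \<bullet> v) \<le> v \<bullet> (M *v v)"
  unfolding loewner_le_def
  by (metis inner_scaleR_right matrix_vector_mul_lid scaleR_matrix_vector_assoc)

lemma loewner_upper: "loewner_le M (c *\<^sub>R mat 1) \<Longrightarrow> v \<bullet> (M *v v) \<le> c * (v \<bullet> v)"
  unfolding loewner_le_def
  by (metis inner_scaleR_right matrix_vector_mul_lid scaleR_matrix_vector_assoc)

lemma axis_entry: "axis i (1::real) \<bullet> (M *v axis j 1) = (M::real^'n^'n) $ i $ j"
proof -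
  have "(M *v axis j 1) $ i = M $ i $ j"
    unfolding matrix_vector_mult_def axis_def by (simp add: if_distrib[of "\<lambda>x. _ * x"] cong: if_cong)
  then show ?thesis by (simp add: inner_axis')
qed

lemma cont_bilin:
  fixes H :: "real^'n \<Rightarrow> real^'n^'n"
  assumes "continuous_on UNIV H"
  shows "continuous_on UNIV (\<lambda>z. u \<bullet> (H z *v v))"
proof -
  have c: "continuous_on UNIV (\<lambda>z. H z $ i $ j)" for i j
    by (intro continuous_on_component assms)
  show ?thesis
    unfolding inner_vec_def matrix_vector_mult_def
    by (auto intro!: continuous_intros c)
qed

lemma taylor1D_up:
  fixes ph qq pp :: "real \<Rightarrow> real"
  assumes d1: "\<And>t. (ph has_real_derivative qq t) (at t)"
    and d2: "\<And>t. (qq has_real_derivative pp t) (at t)"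
    and b: "\<And>t. pp t \<le> L"
  shows "ph 1 \<le> ph 0 + qq 0 + L / 2"
proof -
  define ch where "ch t = ph t - t * qq 0 - L * t^2 / 2" for t
  have cd: "(ch has_real_derivative (qq t - qq 0 - L * t)) (at t)" for t
    unfolding ch_def by (auto intro!: derivative_eq_intros d1)
  obtain xi where xi: "0 < xi" "xi < 1" "ch 1 - ch 0 = (1 - 0) * (qq xi - qq 0 - L * xi)"
    using MVT2[of 0 1 ch, OF _ cd] by auto
  define ps where "ps t = qq t - L * t" for t
  have pd: "(ps has_real_derivative (pp t - L)) (at t)" for t
    unfolding ps_def by (auto intro!: derivative_eq_intros d2)
  obtain et where et: "0 < et" "et < xi" "ps xi - ps 0 = (xi - 0) * (pp et - L)"
    using MVT2[of 0 xi ps, OF xi(1) pd] by auto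
  have "(xi - 0) * (pp et - L) \<le> 0" using xi b[of et] by (simp add: mult_nonneg_nonpos)
  then have "qq xi - qq 0 - L * xi \<le> 0" using et(3) unfolding ps_def by simp
  then have "ch 1 - ch 0 \<le> 0" using xi(3) by simp
  then show ?thesis unfolding ch_def by simp
qed

lemma taylor1D_lo:
  fixes ph qq pp :: "real \<Rightarrow> real"
  assumes d1: "\<And>t. (ph has_real_derivative qq t) (at t)"
    and d2: "\<And>t. (qq has_real_derivative pp t) (at t)"
    and b: "\<And>t. L \<le> pp t"
  shows "ph 0 + qq 0 + L / 2 \<le> ph 1"
proof -
  have "(- ph) 1 \<le> (- ph) 0 + (- qq) 0 + (- L) / 2"
    by (rule taylor1D_up[where pp="- pp"]) (auto intro!: derivative_eq_intros d1 d2 b)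
  then show ?thesis by simp
qed

lemma quad_expand:
  fixes M :: "real^'n^'n"
  assumes sym: "transpose M = M"
  shows "(a + t *\<^sub>R b) \<bullet> (M *v (a + t *\<^sub>R b))
     = a \<bullet> (M *v a) + 2 * t * (a \<bullet> (M *v b)) + t^2 * (b \<bullet> (M *v b))"
proof -
  have "b \<bullet> (M *v a) = a \<bullet> (M *v b)" using mat_sym_inner[OF sym] by simp
  then show ?thesis
    by (simp add: matrix_vector_right_distrib matrix_scaleR_vector_ac
        scaleR_matrix_vector_assoc[symmetric] inner_add_left inner_add_right algebra_simps power2_eq_square)
qed

lemma semi_CS:
  fixes M :: "real^'n^'n"
  assumes sym: "transpose M = M" and psd: "\<And>v. 0 \<le> v \<bullet> (M *v v)"
  shows "(a \<bullet> (M *v b))^2 \<le> (a \<bullet> (M *v a)) * (b \<bullet> (M *v b))"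
proof -
  define A where "A = a \<bullet> (M *v a)"
  define B where "B = a \<bullet> (M *v b)"
  define C where "C = b \<bullet> (M *v b)"
  have q: "0 \<le> A + 2 * t * B + t^2 * C" for t
    using psd[of "a + t *\<^sub>R b"] quad_expand[OF sym, of a t b] unfolding A_def B_def C_def by simp
  have A0: "0 \<le> A" using psd unfolding A_def by simp
  have C0: "0 \<le> C" using psd unfolding C_def by simp
  show ?thesis
  proof (cases "C = 0")
    case True
    have "B = 0"
    proof (rule ccontr)
      assume "B \<noteq> 0"
      have "0 \<le> A + 2 * (- (A + 1) / (2 * B)) * B + (- (A + 1) / (2 * B))^2 * C" by (rule q)
      also have "\<dots> = -1" using \<open>B \<noteq> 0\<close> True by (simp add: field_simps)
      finally show False by simp
    qed
    then show ?thesis using True unfolding A_def[symmetric] B_def[symmetric] C_def[symmetric] by simp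
  next
    case False
    then have Cp: "C > 0" using C0 by simp
    have "0 \<le> A + 2 * (- B / C) * B + (- B / C)^2 * C" by (rule q)
    also have "\<dots> = A - B^2 / C" using Cp by (simp add: field_simps power2_eq_square)
    finally have "B^2 / C \<le> A" by simp
    then have "B^2 \<le> A * C" using Cp by (simp add: field_simps)
    then show ?thesis unfolding A_def B_def C_def .
  qed
qed

lemma sq_bound:
  fixes M :: "real^'n^'n"
  assumes sym: "transpose M = M" and psd: "\<And>v. 0 \<le> v \<bullet> (M *v v)"
    and up: "\<And>v. v \<bullet> (M *v v) \<le> L * (v \<bullet> v)" and L0: "0 \<le> L"
  shows "(M *v p) \<bullet> (M *v p) \<le> L * (p \<bullet> (M *v p))"
proof -
  define q where "q = M *v p"
  have "(q \<bullet> (M *v p))^2 \<le> (q \<bullet> (M *v q)) * (p \<bullet> (M *v p))"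
    by (rule semi_CS[OF sym psd])
  also have "\<dots> \<le> (L * (q \<bullet> q)) * (p \<bullet> (M *v p))"
    using up[of q] psd[of p] by (intro mult_right_mono) auto
  finally have *: "(q \<bullet> q)^2 \<le> (L * (q \<bullet> q)) * (p \<bullet> (M *v p))" unfolding q_def by simp
  show ?thesis
  proof (cases "q \<bullet> q = 0")
    case True then show ?thesis using L0 psd[of p] unfolding q_def by simp
  next
    case False
    then have qp: "q \<bullet> q > 0" by (simp add: inner_gt_zero_iff)
    from * have "(q \<bullet> q) * (q \<bullet> q) \<le> (q \<bullet> q) * (L * (p \<bullet> (M *v p)))"
      by (simp add: power2_eq_square algebra_simps)
    then show ?thesis using qp unfolding q_def by simp
  qed
qed

lemma pd_solvable:
  fixes M :: "real^'n^'n"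
  assumes m: "0 < m" and lo: "\<And>v. m * (v \<bullet> v) \<le> v \<bullet> (M *v v)"
  shows "\<exists>q. M *v q = b"
proof -
  have "inj ((*v) M)"
  proof (rule injI)
    fix x y assume "M *v x = M *v y"
    then have "M *v (x - y) = 0" by (simp add: matrix_vector_mult_diff_distrib)
    then have "m * ((x - y) \<bullet> (x - y)) \<le> 0" using lo[of "x - y"] by simp
    then have "(x - y) \<bullet> (x - y) \<le> 0" using m by (simp add: mult_le_0_iff)
    then show "x = y" by (metis inner_eq_zero_iff inner_ge_zero order.antisym right_minus_eq)
  qed
  then have "surj ((*v) M)" by (rule linear_inj_imp_surj[OF matrix_vector_mul_linear])
  then show ?thesis by (metis surjD)
qed

lemma Htil_sym:
  assumes "\<And>s. transpose (Hh s) = (Hh s :: real^'n^'n)"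
  shows "transpose (Htil_seq w Hh t) = Htil_seq w Hh t"
proof (induction t)
  case 0 then show ?case using assms by (simp add: transpose_add' transpose_scalar)
next
  case (Suc t) then show ?case using assms by (simp add: transpose_add' transpose_scalar)
qed

locale hs =
  fixes f :: "real^'n \<Rightarrow> real"
    and g :: "real^'n \<Rightarrow> real^'n"
    and H :: "real^'n \<Rightarrow> real^'n^'n"
  assumes grad: "\<And>y. (f has_derivative (\<lambda>h. g y \<bullet> h)) (at y)"
    and hess: "\<And>y. (g has_derivative (\<lambda>h. H y *v h)) (at y)"
    and hess_cont: "continuous_on UNIV H"
begin

lemma D1: "((\<lambda>s. f (a + s *\<^sub>R u)) has_real_derivative (g (a + s *\<^sub>R u) \<bullet> u)) (at s)"
proof -
  have "((\<lambda>s. a + s *\<^sub>R u) has_derivative (\<lambda>s. s *\<^sub>R u)) (at s)"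
    by (auto intro!: derivative_eq_intros)
  from diff_chain_at[OF this grad]
  have "((\<lambda>s. f (a + s *\<^sub>R u)) has_derivative (\<lambda>x. g (a + s *\<^sub>R u) \<bullet> (x *\<^sub>R u))) (at s)"
    by (simp add: o_def)
  moreover have "(\<lambda>x. g (a + s *\<^sub>R u) \<bullet> (x *\<^sub>R u)) = (*) (g (a + s *\<^sub>R u) \<bullet> u)"
    by (auto simp: mult.commute)
  ultimately show ?thesis by (simp add: has_field_derivative_def)
qed

lemma D2: "((\<lambda>t. g (a + t *\<^sub>R v) \<bullet> u) has_real_derivative (u \<bullet> (H (a + t *\<^sub>R v) *v v))) (at t)"
proof -
  have "((\<lambda>s. a + s *\<^sub>R v) has_derivative (\<lambda>s. s *\<^sub>R v)) (at t)"
    by (auto intro!: derivative_eq_intros)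
  from diff_chain_at[OF this hess]
  have "((\<lambda>s. g (a + s *\<^sub>R v)) has_derivative (\<lambda>x. H (a + t *\<^sub>R v) *v (x *\<^sub>R v))) (at t)"
    by (simp add: o_def)
  from bounded_linear.has_derivative[OF bounded_linear_inner_left[of u] this]
  have "((\<lambda>s. g (a + s *\<^sub>R v) \<bullet> u) has_derivative (\<lambda>x. (H (a + t *\<^sub>R v) *v (x *\<^sub>R v)) \<bullet> u)) (at t)" .
  moreover have "(\<lambda>x. (H (a + t *\<^sub>R v) *v (x *\<^sub>R v)) \<bullet> u) = (*) (u \<bullet> (H (a + t *\<^sub>R v) *v v))"
    by (auto simp: matrix_scaleR_vector_ac scaleR_matrix_vector_assoc[symmetric] inner_commute mult.commute)
  ultimately show ?thesis by (simp add: has_field_derivative_def)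
qed

lemma mixed:
  assumes h: "0 < h"
  shows "\<exists>z. norm (z - y) \<le> h * (norm u + norm v) \<and>
    f (y + h *\<^sub>R u + h *\<^sub>R v) - f (y + h *\<^sub>R u) - f (y + h *\<^sub>R v) + f y = h^2 * (u \<bullet> (H z *v v))"
proof -
  define k where "k s = f ((y + h *\<^sub>R v) + s *\<^sub>R u) - f (y + s *\<^sub>R u)" for s
  have kd: "(k has_real_derivative (g ((y + h *\<^sub>R v) + s *\<^sub>R u) \<bullet> u - g (y + s *\<^sub>R u) \<bullet> u)) (at s)" for s
    unfolding k_def by (intro derivative_intros D1)
  obtain s1 where s1: "0 < s1" "s1 < h"
    "k h - k 0 = (h - 0) * (g ((y + h *\<^sub>R v) + s1 *\<^sub>R u) \<bullet> u - g (y + s1 *\<^sub>R u) \<bullet> u)"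
    using MVT2[OF h kd] by blast
  define l where "l t = g ((y + s1 *\<^sub>R u) + t *\<^sub>R v) \<bullet> u" for t
  have ld: "(l has_real_derivative (u \<bullet> (H ((y + s1 *\<^sub>R u) + t *\<^sub>R v) *v v))) (at t)" for t
    unfolding l_def by (rule D2)
  obtain t1 where t1: "0 < t1" "t1 < h"
    "l h - l 0 = (h - 0) * (u \<bullet> (H ((y + s1 *\<^sub>R u) + t1 *\<^sub>R v) *v v))"
    using MVT2[OF h ld] by blast
  have e1: "g ((y + h *\<^sub>R v) + s1 *\<^sub>R u) \<bullet> u - g (y + s1 *\<^sub>R u) \<bullet> u = l h - l 0"
    unfolding l_def by (simp add: add_ac)
  have e2: "k h - k 0 = f (y + h *\<^sub>R u + h *\<^sub>R v) - f (y + h *\<^sub>R u) - f (y + h *\<^sub>R v) + f y"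
    unfolding k_def by (simp add: add_ac)
  define z where "z = (y + s1 *\<^sub>R u) + t1 *\<^sub>R v"
  have "norm (z - y) = norm (s1 *\<^sub>R u + t1 *\<^sub>R v)" unfolding z_def by (simp add: algebra_simps)
  also have "\<dots> \<le> s1 * norm u + t1 * norm v"
    using norm_triangle_ineq[of "s1 *\<^sub>R u" "t1 *\<^sub>R v"] s1 t1 by simp
  also have "\<dots> \<le> h * norm u + h * norm v"
    using s1 t1 by (intro add_mono mult_right_mono) auto
  finally have nz: "norm (z - y) \<le> h * (norm u + norm v)" by (simp add: algebra_simps)
  have "f (y + h *\<^sub>R u + h *\<^sub>R v) - f (y + h *\<^sub>R u) - f (y + h *\<^sub>R v) + f y = h^2 * (u \<bullet> (H z *v v))"
    using e2 s1(3) e1 t1(3) unfolding z_def by (simp add: power2_eq_square)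
  with nz show ?thesis by blast
qed

lemma hsym: "u \<bullet> (H y *v v) = v \<bullet> (H y *v u)"
proof (rule ccontr)
  assume ne: "u \<bullet> (H y *v v) \<noteq> v \<bullet> (H y *v u)"
  define d where "d = \<bar>u \<bullet> (H y *v v) - v \<bullet> (H y *v u)\<bar>"
  have dpos: "d > 0" using ne unfolding d_def by simp
  obtain d1 where d1: "d1 > 0" "\<And>z. dist z y < d1 \<Longrightarrow> dist (u \<bullet> (H z *v v)) (u \<bullet> (H y *v v)) < d/2"
    using cont_bilin[OF hess_cont, of u v] dpos unfolding continuous_on_iff
    by (metis UNIV_I half_gt_zero)
  obtain d2 where d2: "d2 > 0" "\<And>z. dist z y < d2 \<Longrightarrow> dist (v \<bullet> (H z *v u)) (v \<bullet> (H y *v u)) < d/2"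
    using cont_bilin[OF hess_cont, of v u] dpos unfolding continuous_on_iff
    by (metis UNIV_I half_gt_zero)
  define h where "h = min d1 d2 / (2 * (norm u + norm v + 1))"
  have hpos: "h > 0" unfolding h_def using d1 d2
    by (simp add: add_nonneg_pos)
  have hb: "h * (norm u + norm v) < min d1 d2"
  proof -
    have "h * (norm u + norm v) \<le> h * (norm u + norm v + 1)" using hpos by simp
    also have "\<dots> = min d1 d2 / 2" unfolding h_def
      using add_nonneg_pos[of "norm u + norm v" 1] by (simp add: field_simps)
    also have "\<dots> < min d1 d2" using d1(1) d2(1) by linarith
    finally show ?thesis .
  qed
  obtain z1 where z1: "norm (z1 - y) \<le> h * (norm u + norm v)"
    "f (y + h *\<^sub>R u + h *\<^sub>R v) - f (y + h *\<^sub>R u) - f (y + h *\<^sub>R v) + f y = h^2 * (u \<bullet> (H z1 *v v))"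
    using mixed[OF hpos, of y u v] by blast
  obtain z2 where z2: "norm (z2 - y) \<le> h * (norm v + norm u)"
    "f (y + h *\<^sub>R v + h *\<^sub>R u) - f (y + h *\<^sub>R v) - f (y + h *\<^sub>R u) + f y = h^2 * (v \<bullet> (H z2 *v u))"
    using mixed[OF hpos, of y v u] by blast
  have "h^2 * (u \<bullet> (H z1 *v v)) = h^2 * (v \<bullet> (H z2 *v u))"
  proof -
    have "y + h *\<^sub>R v + h *\<^sub>R u = y + h *\<^sub>R u + h *\<^sub>R v" by (simp add: add_ac)
    then have "f (y + h *\<^sub>R v + h *\<^sub>R u) = f (y + h *\<^sub>R u + h *\<^sub>R v)" by (rule arg_cong)
    then show ?thesis using z1(2) z2(2) by linarith
  qed
  then have eq: "u \<bullet> (H z1 *v v) = v \<bullet> (H z2 *v u)" using hpos by simp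
  have a1: "\<bar>u \<bullet> (H z1 *v v) - u \<bullet> (H y *v v)\<bar> < d/2"
    using d1(2)[of z1] z1(1) hb by (simp add: dist_norm dist_real_def)
  have a2: "\<bar>v \<bullet> (H z2 *v u) - v \<bullet> (H y *v u)\<bar> < d/2"
    using d2(2)[of z2] z2(1) hb by (simp add: dist_norm dist_real_def add.commute)
  have gen: "\<And>a b A B::real. \<bar>a - A\<bar> < \<bar>A - B\<bar> / 2 \<Longrightarrow> \<bar>b - B\<bar> < \<bar>A - B\<bar> / 2 \<Longrightarrow> a = b \<Longrightarrow> False"
    by (simp add: abs_if split: if_splits)
  show False using gen[OF a1[unfolded d_def] a2[unfolded d_def] eq] .
qed

lemma H_sym: "transpose (H y) = H y"
proof -
  have "(H y) $ i $ j = (H y) $ j $ i" for i j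
    using hsym[of "axis i 1" y "axis j 1"]
    by (simp add: axis_entry)
  then show ?thesis by (simp add: transpose_def vec_eq_iff)
qed

end

locale hs2 = hs f g H for f :: "real^'n \<Rightarrow> real" and g H +
  fixes lmin lmax :: real
  assumes lmin_pos: "0 < lmin"
    and bnds: "\<And>y. loewner_le (lmin *\<^sub>R mat 1) (H y) \<and> loewner_le (H y) (lmax *\<^sub>R mat 1)"
begin

lemma taylor_up: "f (x + d) \<le> f x + g x \<bullet> d + lmax / 2 * (d \<bullet> d)"
proof -
  have "f (x + 1 *\<^sub>R d) \<le> f (x + 0 *\<^sub>R d) + g (x + 0 *\<^sub>R d) \<bullet> d + lmax * (d \<bullet> d) / 2"
    by (rule taylor1D_up[where ph="\<lambda>t. f (x + t *\<^sub>R d)" and qq="\<lambda>t. g (x + t *\<^sub>R d) \<bullet> d"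
          and pp="\<lambda>t. d \<bullet> (H (x + t *\<^sub>R d) *v d)"])
       (auto intro: D1 D2 loewner_upper bnds[THEN conjunct2])
  then show ?thesis by simp
qed

lemma taylor_lo: "f x + g x \<bullet> d + lmin / 2 * (d \<bullet> d) \<le> f (x + d)"
proof -
  have "f (x + 0 *\<^sub>R d) + g (x + 0 *\<^sub>R d) \<bullet> d + lmin * (d \<bullet> d) / 2 \<le> f (x + 1 *\<^sub>R d)"
    by (rule taylor1D_lo[where ph="\<lambda>t. f (x + t *\<^sub>R d)" and qq="\<lambda>t. g (x + t *\<^sub>R d) \<bullet> d"
          and pp="\<lambda>t. d \<bullet> (H (x + t *\<^sub>R d) *v d)"])
       (auto intro: D1 D2 loewner_lower bnds[THEN conjunct1])
  then show ?thesis by simp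
qed

lemma lmin_le_lmax: "lmin \<le> lmax"
proof -
  obtain v :: "real^'n" where "v \<noteq> 0" using zero_neq_one by blast
  have "lmin * (v \<bullet> v) \<le> lmax * (v \<bullet> v)"
    using loewner_lower[OF bnds[THEN conjunct1]] loewner_upper[OF bnds[THEN conjunct2]] order_trans
    by blast
  then show ?thesis using \<open>v \<noteq> 0\<close> by simp
qed

lemma PL: "f x - f z \<le> (g x \<bullet> g x) / (2 * lmin)"
proof -
  have t: "f x + g x \<bullet> (z - x) + lmin / 2 * ((z - x) \<bullet> (z - x)) \<le> f z"
    using taylor_lo[of x "z - x"] by simp
  have "0 \<le> (g x + lmin *\<^sub>R (z - x)) \<bullet> (g x + lmin *\<^sub>R (z - x))" by simp
  then have "0 \<le> g x \<bullet> g x + 2 * lmin * (g x \<bullet> (z - x)) + lmin^2 * ((z - x) \<bullet> (z - x))"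
    by (simp add: algebra_simps inner_commute power2_eq_square)
  then have "0 \<le> (g x \<bullet> g x) / (2 * lmin) + (g x \<bullet> (z - x)) + lmin / 2 * ((z - x) \<bullet> (z - x))"
    using lmin_pos by (simp add: field_simps power2_eq_square)
  with t show ?thesis by linarith
qed

lemma grad_zero_at_min:
  assumes mn: "\<And>y. f z \<le> f y"
  shows "g z = 0"
proof -
  have lmax_pos: "0 < lmax" using lmin_pos lmin_le_lmax by linarith
  have "f z \<le> f (z + (- (1 / lmax)) *\<^sub>R g z)" by (rule mn)
  also have "\<dots> \<le> f z + g z \<bullet> ((- (1 / lmax)) *\<^sub>R g z)
      + lmax / 2 * (((- (1 / lmax)) *\<^sub>R g z) \<bullet> ((- (1 / lmax)) *\<^sub>R g z))"
    by (rule taylor_up)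
  also have "\<dots> = f z - (g z \<bullet> g z) / (2 * lmax)"
    using lmax_pos by (simp add: field_simps power2_eq_square)
  finally have "g z \<bullet> g z \<le> 0" using lmax_pos
    by (simp add: field_simps)
  then show ?thesis by (metis inner_eq_zero_iff inner_ge_zero order.antisym)
qed

lemma dist_bound:
  assumes mn: "\<And>y. f z \<le> f y"
  shows "lmin / 2 * ((x - z) \<bullet> (x - z)) \<le> f x - f z"
  using taylor_lo[of z "x - z"] grad_zero_at_min[OF mn] by simp

lemma armijo_exists:
  assumes gp: "g x \<bullet> p < 0" and b: "0 < \<beta>" "\<beta> < 1" and r: "0 < \<rho>" "\<rho> < 1"
  shows "\<exists>j. f (x + \<rho> ^ j *\<^sub>R p) \<le> f x + \<rho> ^ j * \<beta> * (g x \<bullet> p)"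
proof -
  define D where "D = - (g x \<bullet> p)"
  define K where "K = lmax / 2 * (p \<bullet> p)"
  have Dp: "D > 0" using gp unfolding D_def by simp
  have K0: "K \<ge> 0" unfolding K_def using lmin_pos lmin_le_lmax by simp
  have "(1 - \<beta>) * D / (K + 1) > 0" using Dp K0 b by simp
  then obtain j where j: "\<rho> ^ j < (1 - \<beta>) * D / (K + 1)" using real_arch_pow_inv r(2) by blast
  define \<nu> where "\<nu> = \<rho> ^ j"
  have nup: "\<nu> > 0" unfolding \<nu>_def using r by simp
  have "\<nu> * (K + 1) < (1 - \<beta>) * D" using j K0 unfolding \<nu>_def by (simp add: field_simps)
  then have "\<nu> * K \<le> (1 - \<beta>) * D" using nup by (simp add: algebra_simps)
  then have k2: "\<nu> * (\<nu> * K) \<le> \<nu> * ((1 - \<beta>) * D)" using nup by (intro mult_left_mono) auto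
  have "f (x + \<nu> *\<^sub>R p) \<le> f x + g x \<bullet> (\<nu> *\<^sub>R p) + lmax / 2 * ((\<nu> *\<^sub>R p) \<bullet> (\<nu> *\<^sub>R p))"
    by (rule taylor_up)
  also have "\<dots> = f x - \<nu> * D + \<nu> * (\<nu> * K)" unfolding D_def K_def by (simp add: algebra_simps)
  also have "\<dots> \<le> f x + \<nu> * \<beta> * (g x \<bullet> p)" using k2 unfolding D_def by (simp add: algebra_simps)
  finally show ?thesis unfolding \<nu>_def by blast
qed

lemma step_mono:
  assumes st: "alg_step f g \<beta> \<rho> M x p xn"
    and b: "0 < \<beta>" "\<beta> < 1" and r: "0 < \<rho>" "\<rho> < 1"
  shows "f xn \<le> f x"
  using st unfolding alg_step_def
proof (elim disjE conjE)
  assume gp: "g x \<bullet> p < 0"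
    and xn: "xn = x + \<rho> ^ (LEAST j. f (x + \<rho> ^ j *\<^sub>R p) \<le> f x + \<rho> ^ j * \<beta> * (g x \<bullet> p)) *\<^sub>R p"
  define J where "J = (LEAST j. f (x + \<rho> ^ j *\<^sub>R p) \<le> f x + \<rho> ^ j * \<beta> * (g x \<bullet> p))"
  have PJ: "f (x + \<rho> ^ J *\<^sub>R p) \<le> f x + \<rho> ^ J * \<beta> * (g x \<bullet> p)"
    unfolding J_def by (rule LeastI_ex[OF armijo_exists[OF gp b r]])
  have "\<rho> ^ J * \<beta> > 0" using r b by simp
  then have "\<rho> ^ J * \<beta> * (g x \<bullet> p) \<le> 0" using gp
    by (simp add: mult_pos_neg less_imp_le)
  then show ?thesis using PJ xn unfolding J_def by simp
qed auto

lemma step_contract: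
  assumes mn: "\<And>y. f z \<le> f y"
    and sym: "transpose M = M"
    and lo: "\<And>v. m * (v \<bullet> v) \<le> v \<bullet> (M *v v)"
    and up: "\<And>v. v \<bullet> (M *v v) \<le> L * (v \<bullet> v)"
    and m: "0 < m" "m \<le> lmax" and L: "0 < L"
    and st: "alg_step f g \<beta> \<rho> M x p xn"
    and b: "0 < \<beta>" "\<beta> < 1/2" and r: "0 < \<rho>" "\<rho> < 1"
  shows "f xn - f z \<le> (1 - 4 * \<rho> * \<beta> * (1 - \<beta>) * m * lmin / (lmax * L)) * (f x - f z)"
proof -
  define phi where "phi = 4 * \<rho> * \<beta> * (1 - \<beta>) * m * lmin / (lmax * L)"
  have lmax_pos: "0 < lmax" using m by linarith
  have phi0: "0 \<le> phi" unfolding phi_def using r b m L lmin_pos lmax_pos by simp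
  have fz: "f z \<le> f x" by (rule mn)
  have psd: "0 \<le> v \<bullet> (M *v v)" for v
    using lo[of v] m by (metis inner_ge_zero mult_nonneg_nonneg order.trans less_imp_le)
  have "f x - f xn \<ge> phi * (f x - f z)"
    using st unfolding alg_step_def
  proof (elim disjE conjE)
    assume "\<nexists>q. M *v q = - g x"
    then show ?thesis using pd_solvable[OF m(1) lo] by blast
  next
    assume Mp: "M *v p = - g x" and gp: "0 \<le> g x \<bullet> p" and xn: "xn = x"
    have "p \<bullet> (M *v p) = - (g x \<bullet> p)" using Mp by (simp add: inner_commute)
    then have "m * (p \<bullet> p) \<le> 0" using lo[of p] gp by linarith
    then have "p \<bullet> p \<le> 0" using m by (simp add: mult_le_0_iff)
    then have "p = 0" by (metis inner_eq_zero_iff inner_ge_zero order.antisym)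
    then have "g x = 0" using Mp by simp
    then have "f x - f z \<le> 0" using PL[of x z] by simp
    then show ?thesis using fz xn by simp
  next
    assume Mp: "M *v p = - g x" and gp: "g x \<bullet> p < 0"
      and xn: "xn = x + \<rho> ^ (LEAST j. f (x + \<rho> ^ j *\<^sub>R p) \<le> f x + \<rho> ^ j * \<beta> * (g x \<bullet> p)) *\<^sub>R p"
    define P where "P j \<longleftrightarrow> f (x + \<rho> ^ j *\<^sub>R p) \<le> f x + \<rho> ^ j * \<beta> * (g x \<bullet> p)" for j
    define J where "J = (LEAST j. P j)"
    define D where "D = p \<bullet> (M *v p)"
    define a where "a = lmax / (2 * m)"
    have gpD: "g x \<bullet> p = - D" unfolding D_def using Mp by (simp add: inner_commute)
    have Dp: "D > 0" using gp gpD by simp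
    have pp: "m * (p \<bullet> p) \<le> D" unfolding D_def by (rule lo)
    have gg: "g x \<bullet> g x \<le> L * D"
      using sq_bound[OF sym psd up less_imp_le[OF L], of p] Mp unfolding D_def by simp
    have ahalf: "a \<ge> 1/2" unfolding a_def using m by (simp add: field_simps)
    have apos: "a > 0" using ahalf by simp
    have PLD: "f x - f z \<le> L * D / (2 * lmin)"
      using PL[of x z] gg lmin_pos by (smt (verit) divide_right_mono zero_le_numeral mult_nonneg_nonneg)
    have model: "f (x + \<nu> *\<^sub>R p) \<le> f x - \<nu> * D + \<nu>^2 * a * D" for \<nu>
    proof -
      have "f (x + \<nu> *\<^sub>R p) \<le> f x + g x \<bullet> (\<nu> *\<^sub>R p) + lmax / 2 * ((\<nu> *\<^sub>R p) \<bullet> (\<nu> *\<^sub>R p))"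
        by (rule taylor_up)
      also have "\<dots> = f x - \<nu> * D + \<nu>^2 * (lmax / 2 * (p \<bullet> p))"
        using gpD by (simp add: algebra_simps power2_eq_square)
      also have "lmax / 2 * (p \<bullet> p) \<le> a * D"
      proof -
        have "lmax / 2 * (p \<bullet> p) = a * (m * (p \<bullet> p))" unfolding a_def using m by (simp add: field_simps)
        also have "\<dots> \<le> a * D" using pp apos by (intro mult_left_mono) auto
        finally show ?thesis .
      qed
      then have "\<nu>^2 * (lmax / 2 * (p \<bullet> p)) \<le> \<nu>^2 * (a * D)" by (intro mult_left_mono) auto
      finally show ?thesis by (simp add: algebra_simps)
    qed
    have suff: "P j" if "\<rho> ^ j * a \<le> 1 - \<beta>" for j
    proof -
      define \<nu> where "\<nu> = \<rho> ^ j"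
      have nup: "\<nu> > 0" unfolding \<nu>_def using r by simp
      have "\<nu> * a * D \<le> (1 - \<beta>) * D" using that Dp unfolding \<nu>_def by (intro mult_right_mono) auto
      then have "\<nu> * (\<nu> * a * D) \<le> \<nu> * ((1 - \<beta>) * D)" using nup by (intro mult_left_mono) auto
      then have "f x - \<nu> * D + \<nu>^2 * a * D \<le> f x + \<nu> * \<beta> * (g x \<bullet> p)"
        using gpD by (simp add: algebra_simps power2_eq_square)
      with model[of \<nu>] show ?thesis unfolding P_def \<nu>_def by simp
    qed
    have ex: "\<exists>j. P j" unfolding P_def by (rule armijo_exists[OF gp]) (use b r in auto)
    have PJ: "P J" unfolding J_def by (rule LeastI_ex[OF ex])
    have xnJ: "xn = x + \<rho> ^ J *\<^sub>R p" using xn unfolding J_def P_def by simp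
    have target: "f x - f xn \<ge> \<rho> * \<beta> * (1 - \<beta>) * D / a"
    proof (cases "J = 0")
      case True
      have A1: "f xn \<le> f x - \<beta> * D" using PJ True xnJ gpD unfolding P_def by simp
      have A2: "f xn \<le> f x - D + a * D" using model[of 1] True xnJ by simp
      show ?thesis
      proof (cases "a \<ge> 1 - \<beta>")
        case True
        have "\<rho> * (1 - \<beta>) \<le> 1 - \<beta>" using r b by (intro mult_left_le_one_le) auto
        then have "\<rho> * (1 - \<beta>) \<le> a" using True by linarith
        then have "\<rho> * (1 - \<beta>) / a \<le> 1" using apos by simp
        then have "\<rho> * (1 - \<beta>) / a * (\<beta> * D) \<le> 1 * (\<beta> * D)" using b Dp
          by (intro mult_right_mono) auto
        then have "\<rho> * \<beta> * (1 - \<beta>) * D / a \<le> \<beta> * D" by (simp add: field_simps)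
        then show ?thesis using A1 by linarith
      next
        case False
        have "(a - \<beta>) * (1 - \<beta> - a) \<ge> 0" using False ahalf b by simp
        then have "\<beta> * (1 - \<beta>) \<le> a * (1 - a)" by (simp add: algebra_simps)
        moreover have "\<rho> * (\<beta> * (1 - \<beta>)) \<le> \<beta> * (1 - \<beta>)" using r b
          by (intro mult_left_le_one_le) auto
        ultimately have "\<rho> * \<beta> * (1 - \<beta>) \<le> a * (1 - a)" by simp
        then have "\<rho> * \<beta> * (1 - \<beta>) / a \<le> 1 - a" using apos by (simp add: field_simps)
        then have "\<rho> * \<beta> * (1 - \<beta>) / a * D \<le> (1 - a) * D" using Dp by (intro mult_right_mono) auto
        then show ?thesis using A2 by (simp add: algebra_simps)
      qed
    next
      case False
      then obtain k where k: "J = Suc k" using not0_implies_Suc by blast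
      have "\<not> P k" using not_less_Least[of k P] k unfolding J_def by simp
      then have "\<rho> ^ k * a > 1 - \<beta>" using suff by force
      then have "\<rho> * (\<rho> ^ k * a) > \<rho> * (1 - \<beta>)" using r by simp
      then have mu: "\<rho> ^ J > \<rho> * (1 - \<beta>) / a" using k apos by (simp add: field_simps)
      have A1: "f xn \<le> f x - \<rho> ^ J * \<beta> * D" using PJ xnJ gpD unfolding P_def by simp
      have "\<rho> * (1 - \<beta>) / a * (\<beta> * D) \<le> \<rho> ^ J * (\<beta> * D)"
        using mu b Dp by (intro mult_right_mono) auto
      then show ?thesis using A1 by (simp add: field_simps)
    qed
    have "phi * (f x - f z) \<le> phi * (L * D / (2 * lmin))" using phi0 PLD by (intro mult_left_mono)
    also have "\<dots> = \<rho> * \<beta> * (1 - \<beta>) * D / a"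
      unfolding phi_def a_def using m L lmin_pos lmax_pos by (simp add: field_simps)
    finally show ?thesis using target by linarith
  qed
  then show ?thesis unfolding phi_def by (simp add: algebra_simps)
qed

end


theorem mainTheorem3:
  fixes f :: "real^'n \<Rightarrow> real"
    and g :: "real^'n \<Rightarrow> real^'n"
    and H :: "real^'n \<Rightarrow> real^'n^'n"
    and lmin lmax \<beta> \<rho> \<epsilon> :: real
    and xstar :: "real^'n"
    and w :: "int \<Rightarrow> real"
    and E :: "nat \<Rightarrow> real^'n^'n"
    and x p :: "nat \<Rightarrow> real^'n"
    and T1 :: nat
  assumes grad: "\<And>y. (f has_derivative (\<lambda>h. g y \<bullet> h)) (at y)"
    and hess: "\<And>y. (g has_derivative (\<lambda>h. H y *v h)) (at y)"
    and hess_cont: "continuous_on UNIV H"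
    and lmin_pos: "0 < lmin" and lmin_le: "lmin \<le> lmax"
    and hess_bounds: "\<And>y. loewner_le (lmin *\<^sub>R mat 1) (H y) \<and> loewner_le (H y) (lmax *\<^sub>R mat 1)"
    and xstar_min: "\<And>y. y \<noteq> xstar \<Longrightarrow> f xstar < f y"
    and w_init: "w (-1) = 0"
    and w_mono: "\<And>s t. -1 \<le> s \<Longrightarrow> s \<le> t \<Longrightarrow> w s \<le> w t"
    and w_pos: "\<And>t. 0 \<le> t \<Longrightarrow> 0 < w t"
    and beta: "0 < \<beta>" "\<beta> < 1/2"
    and rho: "0 < \<rho>" "\<rho> < 1"
    and E_sym: "\<And>t. transpose (E t) = E t"
    and steps: "\<And>t. alg_step f g \<beta> \<rho>
                  (Htil_seq w (\<lambda>s. H (x s) + E s) t) (x t) (p t) (x (Suc t))"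
    and eps: "0 < \<epsilon>" "\<epsilon> < 1"
    and Htil_bounds: "\<And>t. T1 \<le> t \<Longrightarrow>
          loewner_le (((1 - \<epsilon>) * lmin) *\<^sub>R mat 1) (Htil_seq w (\<lambda>s. H (x s) + E s) t)
        \<and> loewner_le (Htil_seq w (\<lambda>s. H (x s) + E s) t) (((1 + \<epsilon>) * lmax) *\<^sub>R mat 1)"
  shows "let \<kappa> = lmax / lmin;
             \<phi> = 4 * \<rho> * \<beta> * (1 - \<beta>) * (1 - \<epsilon>) / (\<kappa>\<^sup>2 * (1 + \<epsilon>))
         in (\<forall>t\<ge>T1. f (x (Suc t)) - f xstar \<le> (1 - \<phi>) * (f (x t) - f xstar))
          \<and> (\<forall>t\<ge>T1. norm (x t - xstar)
                 \<le> sqrt (2 / lmin * (f (x 0) - f xstar) * (1 - \<phi>) ^ (t - T1)))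
          \<and> (\<forall>t\<ge>T1. wnorm (H xstar) (x t - xstar)
                 \<le> sqrt (2 * \<kappa> * (f (x 0) - f xstar) * (1 - \<phi>) ^ (t - T1)))"
proof -
  interpret hs2 f g H lmin lmax
    by unfold_locales (auto intro: grad hess hess_cont lmin_pos simp: hess_bounds)
  define Ht where "Ht t = Htil_seq w (\<lambda>s. H (x s) + E s) t" for t
  define m where "m = (1 - \<epsilon>) * lmin"
  define L where "L = (1 + \<epsilon>) * lmax"
  define phi where "phi = 4 * \<rho> * \<beta> * (1 - \<beta>) * (1 - \<epsilon>) / ((lmax / lmin)\<^sup>2 * (1 + \<epsilon>))"
  have lmax_pos: "0 < lmax" using lmin_pos lmin_le by linarith
  have mn: "f xstar \<le> f y" for y using xstar_min[of y] by (cases "y = xstar") auto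
  have phi_eq: "phi = 4 * \<rho> * \<beta> * (1 - \<beta>) * m * lmin / (lmax * L)"
    unfolding phi_def m_def L_def using lmin_pos lmax_pos eps
    by (simp add: field_simps power2_eq_square)
  have m_pos: "0 < m" unfolding m_def using eps lmin_pos by simp
  have m_le: "m \<le> lmax"
  proof -
    have "(1 - \<epsilon>) * lmin \<le> 1 * lmin" using eps lmin_pos by (intro mult_right_mono) auto
    then show ?thesis unfolding m_def using lmin_le by simp
  qed
  have L_pos: "0 < L" unfolding L_def using eps lmax_pos by simp
  have sym: "transpose (Ht t) = Ht t" for t
    unfolding Ht_def by (rule Htil_sym) (simp add: transpose_add' E_sym H_sym)
  have contr: "f (x (Suc t)) - f xstar \<le> (1 - phi) * (f (x t) - f xstar)" if "T1 \<le> t" for t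
    unfolding phi_eq
    by (rule step_contract[OF mn sym[of t], where m=m and L=L and x="x t" and p="p t" and xn="x (Suc t)"])
       (use Htil_bounds[OF that] steps[of t] m_pos m_le L_pos beta rho
         in \<open>auto simp: Ht_def m_def L_def intro: loewner_lower loewner_upper\<close>)
  have phi_le: "phi \<le> 1"
  proof -
    have "m * lmin \<le> lmax * L"
    proof -
      have "m \<le> lmax" by (rule m_le)
      moreover have "lmin \<le> L"
      proof -
        have "1 * lmax \<le> (1 + \<epsilon>) * lmax" using eps lmax_pos by (intro mult_right_mono) auto
        then show ?thesis unfolding L_def using lmin_le by simp
      qed
      ultimately show ?thesis using m_pos lmin_pos by (intro mult_mono) auto
    qed
    then have q: "m * lmin / (lmax * L) \<le> 1" using lmax_pos L_pos by simp
    have bb: "4 * \<beta> * (1 - \<beta>) \<le> 1"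
    proof -
      have "0 \<le> (2 * \<beta> - 1)^2" by simp
      then show ?thesis by (simp add: algebra_simps power2_eq_square)
    qed
    have "phi = \<rho> * (4 * \<beta> * (1 - \<beta>)) * (m * lmin / (lmax * L))" unfolding phi_eq by simp
    also have "\<dots> \<le> 1 * 1 * 1"
      using rho beta bb q m_pos lmin_pos lmax_pos L_pos
      by (intro mult_mono) auto
    finally show ?thesis by simp
  qed
  have mono: "f (x t) \<le> f (x 0)" for t
  proof (induction t)
    case (Suc t)
    have "f (x (Suc t)) \<le> f (x t)" by (rule step_mono[OF steps[of t]]) (use beta rho in auto)
    then show ?case using Suc by simp
  qed simp
  have iter: "f (x (T1 + k)) - f xstar \<le> (1 - phi) ^ k * (f (x 0) - f xstar)" for k
  proof (induction k)
    case 0 then show ?case using mono[of T1] by simp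
  next
    case (Suc k)
    have "f (x (T1 + Suc k)) - f xstar \<le> (1 - phi) * (f (x (T1 + k)) - f xstar)"
      using contr[of "T1 + k"] by simp
    also have "\<dots> \<le> (1 - phi) * ((1 - phi) ^ k * (f (x 0) - f xstar))"
      using Suc phi_le by (intro mult_left_mono) auto
    finally show ?case by simp
  qed
  have fb: "f (x t) - f xstar \<le> (f (x 0) - f xstar) * (1 - phi) ^ (t - T1)" if "T1 \<le> t" for t
    using iter[of "t - T1"] that by (simp add: mult.commute)
  have sq: "(x t - xstar) \<bullet> (x t - xstar) \<le> 2 / lmin * (f (x 0) - f xstar) * (1 - phi) ^ (t - T1)"
    if "T1 \<le> t" for t
  proof -
    have "lmin / 2 * ((x t - xstar) \<bullet> (x t - xstar)) \<le> f (x t) - f xstar"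
      by (rule dist_bound[OF mn])
    also have "\<dots> \<le> (f (x 0) - f xstar) * (1 - phi) ^ (t - T1)" by (rule fb[OF that])
    finally show ?thesis using lmin_pos by (simp add: field_simps)
  qed
  have part2: "norm (x t - xstar) \<le> sqrt (2 / lmin * (f (x 0) - f xstar) * (1 - phi) ^ (t - T1))"
    if "T1 \<le> t" for t
    unfolding norm_eq_sqrt_inner using sq[OF that] by (rule real_sqrt_le_mono)
  have part3: "wnorm (H xstar) (x t - xstar)
      \<le> sqrt (2 * (lmax / lmin) * (f (x 0) - f xstar) * (1 - phi) ^ (t - T1))"
    if "T1 \<le> t" for t
  proof -
    have "(x t - xstar) \<bullet> (H xstar *v (x t - xstar)) \<le> lmax * ((x t - xstar) \<bullet> (x t - xstar))"
      by (rule loewner_upper[OF hess_bounds[THEN conjunct2]])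
    also have "\<dots> \<le> lmax * (2 / lmin * (f (x 0) - f xstar) * (1 - phi) ^ (t - T1))"
      using sq[OF that] lmax_pos by (intro mult_left_mono) auto
    also have "\<dots> = 2 * (lmax / lmin) * (f (x 0) - f xstar) * (1 - phi) ^ (t - T1)"
      by simp
    finally show ?thesis unfolding wnorm_def by (rule real_sqrt_le_mono)
  qed
  show ?thesis
    unfolding Let_def phi_def[symmetric]
    using contr part2 part3 by blast
qed

end
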